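(* Let $\mu \in \mathbb{R}$ and $\sigma > 0$. Let $\mathcal{V}$ be a finite set of nodes partitioned into two non-empty disjoint classes $\mathcal{C}_0, \mathcal{C}_1$ with $\mathcal{C}_0 \cup \mathcal{C}_1 = \mathcal{V}$ and $|\mathcal{C}_0| = |\mathcal{C}_1|$. Each node $v_i$ has a scalar feature $x_i$, the features being independent with $x_i \sim \mathcal{N}(\mu, \sigma^2)$ if $v_i \in \mathcal{C}_0$ and $x_i \sim \mathcal{N}(-\mu, \sigma^2)$ if $v_i \in \mathcal{C}_1$. Let $n \geq 1$ and $0 \le n_0 \le n$ be integers, and suppose every node $v_i$ has a set of neighbors $N(v_i) \subseteq \mathcal{V}\setminus\{v_i\}$ with $|N(v_i)| = n$, of which exactly $n_0$ belong to the same class as $v_i$ and $n_1 = n - n_0$ belong to the other class. For $w \in [0,1]$ define the embedding $$z_i = (1-w)x_i + \frac{w}{n}\sum_{v_j \in N(v_i)} x_j .$$ Define $\texttt{CS}(z;n,n_0,w)$ as the probability that the Bayes-optimal classifier (with equal class priors $1/2$) that predicts the class of $v_i$ from $z_i$ predicts it correctly, i.e., one minus the Bayes error rate. Define $\texttt{LCS}(z;n,n_0,w)$ as $$\frac{\big(\mathbb{E}[z_i \mid v_i \in \mathcal{C}_0] - \mathbb{E}[z_i \mid v_i \in \mathcal{C}_1]\big)^2}{\tfrac{1}{2}\Big(\mathbb{E}\big[(z_i - \mathbb{E}[z_i\mid v_i\in\mathcal{C}_0])^2 \mid v_i \in \mathcal{C}_0\big] + \mathbb{E}\big[(z_i - \mathbb{E}[z_i\mid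 v_i\in\mathcal{C}_1])^2 \mid v_i \in \mathcal{C}_1\big]\Big)},$$ where expectations are over the random features. Let $w, w' \in [0,1]$. If $n_0 = n$, or if $w, w' \in \left[\max\!\left(\frac{n-2n_0}{2n-2n_0}, 0\right), 1\right]$, then $$\texttt{CS}(z;n,n_0,w) > \texttt{CS}(z;n,n_0,w') \iff \texttt{LCS}(z;n,n_0,w) > \texttt{LCS}(z;n,n_0,w').$$
   Context: $\texttt{CS}$ ("class separability") and $\texttt{LCS}$ ("latent-class separability", an extension of the Calinski–Harabasz index) are as defined in the claim; $w$ is the degree of graph convolution usage. The expectations and the Bayes classifier are taken with respect to the random node features, with the graph structure (neighbor counts $n$, $n_0$) fixed. *)

theory Defs
  imports "HOL-Probability.Probability"
begin

definition embed :: "('v \<Rightarrow> 'a \<Rightarrow> real) \<Rightarrow> ('v \<Rightarrow> 'v set) \<Rightarrow> nat \<Rightarrow> real \<Rightarrow> 'v \<Rightarrow> 'a \<Rightarrow> real" where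
  "embed X N n w i \<omega> = (1 - w) * X i \<omega> + (w / real n) * (\<Sum>j\<in>N i. X j \<omega>)"

definition cond_prob :: "'a measure \<Rightarrow> ('v \<Rightarrow> 'a \<Rightarrow> real) \<Rightarrow> 'v set \<Rightarrow> real set \<Rightarrow> real" where
  "cond_prob M Z C A = (1 / real (card C)) * (\<Sum>i\<in>C. measure M {\<omega> \<in> space M. Z i \<omega> \<in> A})"

definition cond_exp :: "'a measure \<Rightarrow> ('v \<Rightarrow> 'a \<Rightarrow> real) \<Rightarrow> 'v set \<Rightarrow> (real \<Rightarrow> real) \<Rightarrow> real" where
  "cond_exp M Z C g = (1 / real (card C)) * (\<Sum>i\<in>C. integral\<^sup>L M (\<lambda>\<omega>. g (Z i \<omega>)))"

text \<open>CS: accuracy of the Bayes-optimal classifier with equal priors 1/2, i.e. the supremum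
  over all (Borel) decision rules "predict C0 iff z in A" of the probability of a correct
  prediction (= one minus the Bayes error rate).\<close>
definition CS :: "'a measure \<Rightarrow> ('v \<Rightarrow> 'a \<Rightarrow> real) \<Rightarrow> ('v \<Rightarrow> 'v set) \<Rightarrow> 'v set \<Rightarrow> 'v set \<Rightarrow> nat \<Rightarrow> real \<Rightarrow> real" where
  "CS M X N C0 C1 n w =
     (SUP A \<in> sets borel. (1/2) * cond_prob M (embed X N n w) C0 A
                        + (1/2) * (1 - cond_prob M (embed X N n w) C1 A))"

definition LCS :: "'a measure \<Rightarrow> ('v \<Rightarrow> 'a \<Rightarrow> real) \<Rightarrow> ('v \<Rightarrow> 'v set) \<Rightarrow> 'v set \<Rightarrow> 'v set \<Rightarrow> nat \<Rightarrow> real \<Rightarrow> real" where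
  "LCS M X N C0 C1 n w =
     (let Z = embed X N n w;
          m0 = cond_exp M Z C0 (\<lambda>z. z);
          m1 = cond_exp M Z C1 (\<lambda>z. z)
      in (m0 - m1)\<^sup>2 /
         ((1/2) * (cond_exp M Z C0 (\<lambda>z. (z - m0)\<^sup>2) + cond_exp M Z C1 (\<lambda>z. (z - m1)\<^sup>2))))"

end

theory Submission
  imports Defs
begin

definition Pn :: "real \<Rightarrow> real \<Rightarrow> real set \<Rightarrow> real" where
  "Pn m s A = measure (density lborel (\<lambda>x. ennreal (normal_density m s x))) A"

lemma Pn_emeasure:
  assumes "s > 0" "A \<in> sets borel"
  shows "ennreal (Pn m s A) = (\<integral>\<^sup>+ x. ennreal (normal_density m s x) * indicator A x \<partial>lborel)"
proof -
  interpret P: prob_space "density lborel (\<lambda>x. ennreal (normal_density m s x))"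
    using prob_space_normal_density assms(1) by blast
  show ?thesis unfolding Pn_def
    using assms by (subst P.emeasure_eq_measure[symmetric]) (simp add: emeasure_density)
qed

lemma Pn_affine:
  assumes s: "s > 0" and A: "A \<in> sets borel"
  shows "Pn m s A = Pn 0 1 {y. m + s * y \<in> A}"
proof -
  have B: "{y. m + s * y \<in> A} \<in> sets borel" using A by measurable
  have "ennreal (Pn m s A) = (\<integral>\<^sup>+ x. ennreal (normal_density m s x) * indicator A x \<partial>lborel)"
    by (rule Pn_emeasure[OF s A])
  also have "\<dots> = ennreal \<bar>s\<bar> * (\<integral>\<^sup>+ x. ennreal (normal_density m s (m + s * x)) * indicator A (m + s * x) \<partial>lborel)"
    using s A by (subst nn_integral_real_affine[where c=s and t=m]) auto
  also have "\<dots> = (\<integral>\<^sup>+ x. ennreal \<bar>s\<bar> * (ennreal (normal_density m s (m + s * x)) * indicator A (m + s * x)) \<partial>lborel)"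
    using A by (subst nn_integral_cmult) auto
  also have "\<dots> = (\<integral>\<^sup>+ x. ennreal (normal_density 0 1 x) * indicator {y. m + s * y \<in> A} x \<partial>lborel)"
  proof (rule nn_integral_cong)
    fix x
    have "\<bar>s\<bar> * normal_density m s (m + s * x) = normal_density 0 1 x"
      using s by (simp add: normal_density_def real_sqrt_mult power_mult_distrib field_simps)
    then show "ennreal \<bar>s\<bar> * (ennreal (normal_density m s (m + s * x)) * indicator A (m + s * x)) =
      ennreal (normal_density 0 1 x) * indicator {y. m + s * y \<in> A} x"
      using s by (auto simp: indicator_def ennreal_mult[symmetric] mult.assoc[symmetric] simp del: ennreal_mult)
  qed
  also have "\<dots> = ennreal (Pn 0 1 {y. m + s * y \<in> A})"
    by (rule Pn_emeasure[symmetric]) (use B in auto)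
  finally show ?thesis
    by (simp add: Pn_def)
qed

lemma Pn_prob: "s > 0 \<Longrightarrow> prob_space (density lborel (\<lambda>x. ennreal (normal_density m s x)))"
  using prob_space_normal_density by blast

lemma Pn_split:
  assumes "s > 0" "A \<in> sets borel" "C \<in> sets borel"
  shows "Pn m s A = Pn m s (A \<inter> C) + Pn m s (A - C)"
proof -
  interpret P: prob_space "density lborel (\<lambda>x. ennreal (normal_density m s x))"
    using Pn_prob assms(1) by blast
  have "A = (A \<inter> C) \<union> (A - C)" by blast
  then have "Pn m s A = Pn m s ((A \<inter> C) \<union> (A - C))" by simp
  also have "\<dots> = Pn m s (A \<inter> C) + Pn m s (A - C)"
    unfolding Pn_def using assms by (intro P.finite_measure_Union) auto
  finally show ?thesis .
qed

lemma Pn_mono_set: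
  assumes "s > 0" "A \<in> sets borel" "C \<in> sets borel" "A \<subseteq> C"
  shows "Pn m s A \<le> Pn m s C"
proof -
  interpret P: prob_space "density lborel (\<lambda>x. ennreal (normal_density m s x))"
    using Pn_prob assms(1) by blast
  show ?thesis unfolding Pn_def using assms by (intro P.finite_measure_mono) auto
qed

lemma Pn_mono_dens:
  assumes s: "s > 0" and E: "E \<in> sets borel" and le: "\<And>x. x \<in> E \<Longrightarrow> normal_density a s x \<le> normal_density b s x"
  shows "Pn a s E \<le> Pn b s E"
proof -
  have "ennreal (Pn a s E) = (\<integral>\<^sup>+ x. ennreal (normal_density a s x) * indicator E x \<partial>lborel)"
    by (rule Pn_emeasure[OF s E])
  also have "\<dots> \<le> (\<integral>\<^sup>+ x. ennreal (normal_density b s x) * indicator E x \<partial>lborel)"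
    by (intro nn_integral_mono) (auto simp: indicator_def le)
  also have "\<dots> = ennreal (Pn b s E)"
    by (rule Pn_emeasure[OF s E, symmetric])
  finally show ?thesis
    by (subst (asm) ennreal_le_iff) (auto simp: Pn_def)
qed

lemma dens_cmp:
  assumes s: "s > 0" and mx: "0 \<le> m * x"
  shows "normal_density (-m) s x \<le> normal_density m s x"
proof -
  have "(x - m)\<^sup>2 \<le> (x - - m)\<^sup>2" using mx by (simp add: power2_eq_square algebra_simps)
  then have "- (x - - m)\<^sup>2 / (2 * s\<^sup>2) \<le> - (x - m)\<^sup>2 / (2 * s\<^sup>2)"
    using s by (simp add: divide_right_mono)
  then show ?thesis unfolding normal_density_def
    by (intro mult_left_mono) auto
qed

definition Bm :: "real \<Rightarrow> real set" where
  "Bm m = (if m \<ge> 0 then {0<..} else {..0})"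

lemma Bm_sets[measurable]: "Bm m \<in> sets borel"
  by (simp add: Bm_def)

lemma sup_bound:
  assumes s: "s > 0" and A: "A \<in> sets borel"
  shows "Pn m s A - Pn (-m) s A \<le> Pn m s (Bm m) - Pn (-m) s (Bm m)"
proof -
  have in1: "0 \<le> m * x" if "x \<in> Bm m" for x
    using that by (auto simp: Bm_def split: if_splits intro: mult_nonpos_nonpos)
  have in2: "(-m) * x \<ge> 0" if "x \<notin> Bm m" for x
    using that by (auto simp: Bm_def split: if_splits intro: mult_nonneg_nonpos mult_nonpos_nonneg)
  let ?B = "Bm m"
  have a1: "Pn m s A = Pn m s (A \<inter> ?B) + Pn m s (A - ?B)" using Pn_split[OF s A Bm_sets] .
  have a2: "Pn (-m) s A = Pn (-m) s (A \<inter> ?B) + Pn (-m) s (A - ?B)" using Pn_split[OF s A Bm_sets] .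
  have b1: "Pn m s ?B = Pn m s (?B \<inter> A) + Pn m s (?B - A)" using Pn_split[OF s Bm_sets A] .
  have b2: "Pn (-m) s ?B = Pn (-m) s (?B \<inter> A) + Pn (-m) s (?B - A)" using Pn_split[OF s Bm_sets A] .
  have c1: "Pn m s (A - ?B) \<le> Pn (-m) s (A - ?B)"
    using Pn_mono_dens[OF s, of "A - ?B" m "-m"] dens_cmp[OF s in2] A by auto
  have c2: "Pn (-m) s (?B - A) \<le> Pn m s (?B - A)"
    using Pn_mono_dens[OF s, of "?B - A" "-m" m] dens_cmp[OF s in1] A by auto
  have "A \<inter> ?B = ?B \<inter> A" by blast
  then show ?thesis using a1 a2 b1 b2 c1 c2 by simp
qed

definition Hs :: "real \<Rightarrow> real" where
  "Hs a = Pn 0 1 {-a<..a}"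

lemma Bm_value:
  assumes s: "s > 0"
  shows "Pn m s (Bm m) - Pn (-m) s (Bm m) = Hs (\<bar>m\<bar> / s)"
proof (cases "m \<ge> 0")
  case True
  let ?r = "m / s"
  have r: "?r \<ge> 0" using True s by simp
  have e1: "{y. m + s * y \<in> {0<..}} = {-?r<..}" using s by (auto simp: field_simps)
  have e2: "{y. -m + s * y \<in> {0<..}} = {?r<..}" using s by (auto simp: field_simps)
  have "Pn 0 1 {-?r<..} = Pn 0 1 ({-?r<..} \<inter> {..?r}) + Pn 0 1 ({-?r<..} - {..?r})"
    by (rule Pn_split) auto
  also have "{-?r<..} \<inter> {..?r} = {-?r<..?r}" by auto
  also have "{-?r<..} - {..?r} = {?r<..}" using r by auto
  finally have 3: "Pn 0 1 {-?r<..} = Pn 0 1 {-?r<..?r} + Pn 0 1 {?r<..}" .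
  have 1: "Pn m s {0<..} = Pn 0 1 {-?r<..}" unfolding e1[symmetric] by (rule Pn_affine[OF s]) simp
  have 2: "Pn (-m) s {0<..} = Pn 0 1 {?r<..}" unfolding e2[symmetric] by (rule Pn_affine[OF s]) simp
  show ?thesis using True 1 2 3 r by (simp add: Bm_def Hs_def)
next
  case False
  let ?r = "- m / s"
  have r: "?r \<ge> 0" using False s by (simp add: divide_nonpos_pos)
  have e1: "{y. m + s * y \<in> {..0}} = {..?r}" using s by (auto simp: field_simps)
  have e2: "{y. -m + s * y \<in> {..0}} = {..-?r}" using s by (auto simp: field_simps)
  have "Pn 0 1 {..?r} = Pn 0 1 ({..?r} \<inter> {-?r<..}) + Pn 0 1 ({..?r} - {-?r<..})"
    by (rule Pn_split) auto
  also have "{..?r} \<inter> {-?r<..} = {-?r<..?r}" by auto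
  also have "{..?r} - {-?r<..} = {..-?r}" using r by auto
  finally have 3: "Pn 0 1 {..?r} = Pn 0 1 {-?r<..?r} + Pn 0 1 {..-?r}" .
  have 1: "Pn m s {..0} = Pn 0 1 {..?r}" unfolding e1[symmetric] by (rule Pn_affine[OF s]) simp
  have 2: "Pn (-m) s {..0} = Pn 0 1 {..-?r}" unfolding e2[symmetric] by (rule Pn_affine[OF s]) simp
  have 4: "\<bar>m\<bar> / s = ?r" using False by simp
  show ?thesis using False 1 2 3 by (simp only: Bm_def Hs_def if_False 4)
qed

lemma Pn_pos:
  assumes ab: "0 \<le> a" "a < b"
  shows "Pn 0 1 {a<..b} > 0"
proof -
  have "ennreal (normal_density 0 1 b) * ennreal (b - a) = ennreal (normal_density 0 1 b) * emeasure lborel {a<..b}"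
    using ab by simp
  also have "\<dots> = (\<integral>\<^sup>+ x. ennreal (normal_density 0 1 b) * indicator {a<..b} x \<partial>lborel)"
    by (subst nn_integral_cmult_indicator) auto
  also have "\<dots> \<le> (\<integral>\<^sup>+ x. ennreal (normal_density 0 1 x) * indicator {a<..b} x \<partial>lborel)"
  proof (intro nn_integral_mono)
    fix x
    show "ennreal (normal_density 0 1 b) * indicator {a<..b} x \<le> ennreal (normal_density 0 1 x) * indicator {a<..b} x"
    proof (cases "x \<in> {a<..b}")
      case True
      then have "x\<^sup>2 \<le> b\<^sup>2" using ab by (intro power_mono) auto
      then have "exp (-(b\<^sup>2/2)) \<le> exp (-(x\<^sup>2/2))" by simp
      then have "normal_density 0 1 b \<le> normal_density 0 1 x"
        by (simp add: std_normal_density_def divide_right_mono)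
      then show ?thesis using True by simp
    qed simp
  qed
  also have "\<dots> = ennreal (Pn 0 1 {a<..b})"
    by (rule Pn_emeasure[symmetric]) auto
  finally have "ennreal (normal_density 0 1 b * (b - a)) \<le> ennreal (Pn 0 1 {a<..b})"
    using ab by (simp add: ennreal_mult normal_density_nonneg)
  moreover have "normal_density 0 1 b * (b - a) > 0"
    using ab by (simp add: normal_density_pos)
  ultimately show ?thesis
    by (smt (verit) ennreal_le_iff Pn_def measure_nonneg)
qed

lemma Hs_strict:
  assumes ab: "0 \<le> a" "a < b"
  shows "Hs a < Hs b"
proof -
  have "Pn 0 1 {-b<..b} = Pn 0 1 ({-b<..b} \<inter> {-a<..a}) + Pn 0 1 ({-b<..b} - {-a<..a})"
    by (rule Pn_split) auto
  also have "{-b<..b} \<inter> {-a<..a} = {-a<..a}" using ab by auto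
  finally have 1: "Hs b = Hs a + Pn 0 1 ({-b<..b} - {-a<..a})" by (simp add: Hs_def)
  have "Pn 0 1 {a<..b} \<le> Pn 0 1 ({-b<..b} - {-a<..a})"
    using ab by (intro Pn_mono_set) auto
  with Pn_pos[OF ab] 1 show ?thesis by simp
qed

lemma Hs_iff:
  assumes "0 \<le> a" "0 \<le> b"
  shows "Hs a > Hs b \<longleftrightarrow> a > b"
  using Hs_strict assms by (metis linorder_neqE_linordered_idom order_less_asym order_less_irrefl)


lemma avg_const:
  assumes "finite C" "C \<noteq> {}" "\<And>i. i \<in> C \<Longrightarrow> f i = c"
  shows "(1 / real (card C)) * (\<Sum>i\<in>C. f i) = c"
  using assms by simp

lemma prob_dist:
  assumes M: "prob_space M" and s: "s > 0" and A: "A \<in> sets borel"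
    and D: "distributed M lborel X (\<lambda>x. ennreal (normal_density m s x))"
  shows "measure M {\<omega> \<in> space M. X \<omega> \<in> A} = Pn m s A"
proof -
  have Xm: "X \<in> measurable M lborel" using distributed_measurable[OF D] .
  have "measure M {\<omega> \<in> space M. X \<omega> \<in> A} = measure (distr M lborel X) A"
    using A Xm by (subst measure_distr) (auto simp: vimage_def Int_def conj_commute)
  also have "\<dots> = Pn m s A"
    unfolding Pn_def distributed_distr_eq_density[OF D] ..
  finally show ?thesis .
qed

lemma CS_value:
  assumes M: "prob_space M" and s: "s > 0"
    and C0: "finite C0" "C0 \<noteq> {}" and C1: "finite C1" "C1 \<noteq> {}"
    and D0: "\<And>i. i \<in> C0 \<Longrightarrow> distributed M lborel (Z i) (\<lambda>x. ennreal (normal_density m s x))"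
    and D1: "\<And>i. i \<in> C1 \<Longrightarrow> distributed M lborel (Z i) (\<lambda>x. ennreal (normal_density (-m) s x))"
  shows "(SUP A \<in> sets borel. (1/2) * cond_prob M Z C0 A + (1/2) * (1 - cond_prob M Z C1 A))
         = 1/2 + 1/2 * Hs (\<bar>m\<bar> / s)"
proof -
  have cp0: "cond_prob M Z C0 A = Pn m s A" if "A \<in> sets borel" for A
    unfolding cond_prob_def using C0 prob_dist[OF M s that D0] by (intro avg_const) auto
  have cp1: "cond_prob M Z C1 A = Pn (-m) s A" if "A \<in> sets borel" for A
    unfolding cond_prob_def using C1 prob_dist[OF M s that D1] by (intro avg_const) auto
  have eq: "(1/2) * cond_prob M Z C0 A + (1/2) * (1 - cond_prob M Z C1 A) = 1/2 + 1/2 * (Pn m s A - Pn (-m) s A)"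
    if "A \<in> sets borel" for A using cp0[OF that] cp1[OF that] by (simp add: algebra_simps)
  show ?thesis
  proof (rule cSup_eq_maximum)
    show "1/2 + 1/2 * Hs (\<bar>m\<bar> / s) \<in> (\<lambda>A. (1/2) * cond_prob M Z C0 A + (1/2) * (1 - cond_prob M Z C1 A)) ` sets borel"
      using eq[OF Bm_sets] Bm_value[OF s, of m] by (intro image_eqI[where x="Bm m"]) auto
  next
    fix x assume "x \<in> (\<lambda>A. (1/2) * cond_prob M Z C0 A + (1/2) * (1 - cond_prob M Z C1 A)) ` sets borel"
    then obtain A where A: "A \<in> sets borel" and x: "x = (1/2) * cond_prob M Z C0 A + (1/2) * (1 - cond_prob M Z C1 A)" by blast
    show "x \<le> 1/2 + 1/2 * Hs (\<bar>m\<bar> / s)"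
      using x eq[OF A] sup_bound[OF s A, of m] Bm_value[OF s, of m] by simp
  qed
qed

lemma LCS_value:
  assumes M: "prob_space M" and s: "s > 0"
    and C0: "finite C0" "C0 \<noteq> {}" and C1: "finite C1" "C1 \<noteq> {}"
    and D0: "\<And>i. i \<in> C0 \<Longrightarrow> distributed M lborel (Z i) (\<lambda>x. ennreal (normal_density m s x))"
    and D1: "\<And>i. i \<in> C1 \<Longrightarrow> distributed M lborel (Z i) (\<lambda>x. ennreal (normal_density (-m) s x))"
  shows "(let m0 = cond_exp M Z C0 (\<lambda>z. z); m1 = cond_exp M Z C1 (\<lambda>z. z)
      in (m0 - m1)\<^sup>2 / ((1/2) * (cond_exp M Z C0 (\<lambda>z. (z - m0)\<^sup>2) + cond_exp M Z C1 (\<lambda>z. (z - m1)\<^sup>2))))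
    = 4 * (\<bar>m\<bar> / s)\<^sup>2"
proof -
  interpret prob_space M by (rule M)
  have e0: "cond_exp M Z C0 (\<lambda>z. z) = m"
    unfolding cond_exp_def using C0 normal_distributed_expectation[OF s D0] by (intro avg_const) auto
  have e1: "cond_exp M Z C1 (\<lambda>z. z) = -m"
    unfolding cond_exp_def using C1 normal_distributed_expectation[OF s D1] by (intro avg_const) auto
  have v0: "cond_exp M Z C0 (\<lambda>z. (z - m)\<^sup>2) = s\<^sup>2"
    unfolding cond_exp_def using C0 normal_distributed_variance[OF s D0] normal_distributed_expectation[OF s D0]
    by (intro avg_const) auto
  have v1: "cond_exp M Z C1 (\<lambda>z. (z - -m)\<^sup>2) = s\<^sup>2"
    unfolding cond_exp_def using C1 normal_distributed_variance[OF s D1] normal_distributed_expectation[OF s D1]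
    by (intro avg_const) auto
  show ?thesis using s unfolding Let_def e0 e1 v0 v1
    by (simp add: power_divide power2_eq_square field_simps)
qed


lemma embed_dist:
  fixes M :: "'a measure" and X :: "'v \<Rightarrow> 'a \<Rightarrow> real"
  assumes M: "prob_space M" and \<sigma>: "\<sigma> > 0"
    and V: "finite V" and dj: "C0 \<inter> C1 = {}" and un: "C0 \<union> C1 = V"
    and ind: "prob_space.indep_vars M (\<lambda>_. borel) X V"
    and D0: "\<And>i. i \<in> C0 \<Longrightarrow> distributed M lborel (X i) (\<lambda>x. ennreal (normal_density \<mu> \<sigma> x))"
    and D1: "\<And>i. i \<in> C1 \<Longrightarrow> distributed M lborel (X i) (\<lambda>x. ennreal (normal_density (- \<mu>) \<sigma> x))"
    and n: "n \<ge> 1"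
    and Nsub: "N i \<subseteq> V - {i}" and Ncard: "card (N i) = n"
    and Nn0: "card (N i \<inter> (if i \<in> C0 then C0 else C1)) = n0"
    and w: "w \<in> {0..1}" and i: "i \<in> V"
  shows "distributed M lborel (embed X N n w i)
     (\<lambda>x. ennreal (normal_density ((if i \<in> C0 then 1 else -1) * (\<mu> * ((1 - w) + w * (2 * real n0 - real n) / real n)))
        (\<sigma> * sqrt ((1 - w)\<^sup>2 + w\<^sup>2 / real n)) x))"
proof -
  interpret prob_space M by (rule M)
  define T where "T = insert i (N i)"
  define c where "c j = (if j = i then 1 - w else w / real n)" for j
  define I where "I = {j \<in> T. c j \<noteq> 0}"
  define mu where "mu j = (if j \<in> C0 then \<mu> else - \<mu>)" for j
  have finN: "finite (N i)" using Nsub V finite_subset by blast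
  have iN: "i \<notin> N i" using Nsub by blast
  have finT: "finite T" using finN T_def by simp
  have TV: "T \<subseteq> V" using Nsub i T_def by blast
  have IT: "I \<subseteq> T" using I_def by blast
  have finI: "finite I" using finT IT finite_subset by blast
  have npos: "real n > 0" using n by simp
  have Nne: "N i \<noteq> {}" using Ncard n by auto
  have Ine: "I \<noteq> {}"
  proof (cases "w = 1")
    case True
    then obtain j where "j \<in> N i" using Nne by blast
    then have "j \<in> I" using True iN npos by (auto simp: I_def T_def c_def)
    then show ?thesis by blast
  next
    case False
    then have "i \<in> I" by (auto simp: I_def T_def c_def)
    then show ?thesis by blast
  qed
  have sumNc: "(\<Sum>j\<in>N i. c j * f j) = w / real n * (\<Sum>j\<in>N i. f j)" for f :: "'v \<Rightarrow> real"
  proof -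
    have "(\<Sum>j\<in>N i. c j * f j) = (\<Sum>j\<in>N i. w / real n * f j)"
      using iN by (intro sum.cong) (auto simp: c_def)
    then show ?thesis by (simp add: sum_distrib_left)
  qed
  have sumT: "(\<Sum>j\<in>T. c j * f j) = (1 - w) * f i + w / real n * (\<Sum>j\<in>N i. f j)" for f :: "'v \<Rightarrow> real"
    unfolding T_def using finN iN by (simp add: sum.insert sumNc) (simp add: c_def)
  have sumI: "(\<Sum>j\<in>I. c j * f j) = (\<Sum>j\<in>T. c j * f j)" for f :: "'v \<Rightarrow> real"
    using finT IT by (intro sum.mono_neutral_left) (auto simp: I_def)
  have emb: "embed X N n w i = (\<lambda>\<omega>. \<Sum>j\<in>I. c j * X j \<omega>)"
    by (rule ext) (simp add: embed_def sumI sumT)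
  have indI: "indep_vars (\<lambda>_. borel) (\<lambda>j \<omega>. c j * X j \<omega>) I"
  proof -
    have "indep_vars (\<lambda>_. borel) X I" using indep_vars_subset[OF ind] IT TV by blast
    then show ?thesis by (rule indep_vars_compose2[where Y="\<lambda>j x. c j * x"]) auto
  qed
  have Dj: "distributed M lborel (\<lambda>\<omega>. c j * X j \<omega>) (\<lambda>x. ennreal (normal_density (c j * mu j) (\<bar>c j\<bar> * \<sigma>) x))"
    if j: "j \<in> I" for j
  proof -
    have cj: "c j \<noteq> 0" using j I_def by blast
    have jV: "j \<in> V" using j IT TV by blast
    have DX: "distributed M lborel (X j) (\<lambda>x. ennreal (normal_density (mu j) \<sigma> x))"
      using jV un D0 D1 dj by (cases "j \<in> C0") (auto simp: mu_def)
    show ?thesis using normal_density_affine[OF DX \<sigma> cj, of 0] by simp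
  qed
  have S: "distributed M lborel (\<lambda>\<omega>. \<Sum>j\<in>I. c j * X j \<omega>)
      (\<lambda>x. ennreal (normal_density (\<Sum>j\<in>I. c j * mu j) (sqrt (\<Sum>j\<in>I. (\<bar>c j\<bar> * \<sigma>)\<^sup>2)) x))"
    by (rule sum_indep_normal[OF finI Ine indI]) (use Dj \<sigma> I_def in auto)
  have var: "sqrt (\<Sum>j\<in>I. (\<bar>c j\<bar> * \<sigma>)\<^sup>2) = \<sigma> * sqrt ((1 - w)\<^sup>2 + w\<^sup>2 / real n)"
  proof -
    have "(\<Sum>j\<in>I. (\<bar>c j\<bar> * \<sigma>)\<^sup>2) = (\<Sum>j\<in>I. c j * (c j * \<sigma>\<^sup>2))"
      by (intro sum.cong) (auto simp: power2_eq_square)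
    also have "\<dots> = (1 - w) * ((1 - w) * \<sigma>\<^sup>2) + w / real n * (\<Sum>j\<in>N i. c j * \<sigma>\<^sup>2)"
      unfolding sumI[of "\<lambda>j. c j * \<sigma>\<^sup>2"] sumT by (simp add: c_def)
    also have "(\<Sum>j\<in>N i. c j * \<sigma>\<^sup>2) = w / real n * (real n * \<sigma>\<^sup>2)"
      using sumNc[of "\<lambda>_. \<sigma>\<^sup>2"] Ncard by simp
    finally have "(\<Sum>j\<in>I. (\<bar>c j\<bar> * \<sigma>)\<^sup>2) = \<sigma>\<^sup>2 * ((1 - w)\<^sup>2 + w\<^sup>2 / real n)"
      using npos by (simp add: power2_eq_square field_simps)
    then show ?thesis using \<sigma> by (simp add: real_sqrt_mult)
  qed
  have sumN_mu: "(\<Sum>j\<in>N i. mu j) = \<mu> * (2 * real (card (N i \<inter> C0)) - real n)"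
  proof -
    have "(\<Sum>j\<in>N i. mu j) = (\<Sum>j\<in>N i \<inter> C0. mu j) + (\<Sum>j\<in>N i - C0. mu j)"
      using finN by (rule sum.Int_Diff)
    also have "(\<Sum>j\<in>N i \<inter> C0. mu j) = real (card (N i \<inter> C0)) * \<mu>"
      by (simp add: mu_def)
    also have "(\<Sum>j\<in>N i - C0. mu j) = - real (card (N i - C0)) * \<mu>"
      by (simp add: mu_def)
    also have "card (N i - C0) = n - card (N i \<inter> C0)"
      using Ncard finN by (metis card_Diff_subset_Int Diff_Diff_Int Int_commute Int_lower1 finite_Int card_Diff_subset)
    also have "card (N i \<inter> C0) \<le> n" using Ncard finN by (metis card_mono Int_lower1)
    ultimately show ?thesis by (simp add: of_nat_diff algebra_simps)
  qed
  have k: "real (card (N i \<inter> C0)) = (if i \<in> C0 then real n0 else real n - real n0)"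
  proof (cases "i \<in> C0")
    case False
    have "N i \<inter> C1 = N i - C0" using Nsub un dj by blast
    then have "card (N i \<inter> C1) = n - card (N i \<inter> C0)"
      using Ncard finN by (metis card_Diff_subset_Int Diff_Diff_Int Int_commute Int_lower1 finite_Int card_Diff_subset)
    moreover have "card (N i \<inter> C0) \<le> n" using Ncard finN by (metis card_mono Int_lower1)
    ultimately show ?thesis using Nn0 False by (simp add: of_nat_diff)
  qed (use Nn0 in simp)
  have mean: "(\<Sum>j\<in>I. c j * mu j) = (if i \<in> C0 then 1 else -1) * (\<mu> * ((1 - w) + w * (2 * real n0 - real n) / real n))"
    unfolding sumI sumT sumN_mu k using npos by (auto simp: mu_def field_simps)
  show ?thesis using S unfolding emb mean var .
qed


theorem theorem1:
  fixes M :: "'a measure" and X :: "'v \<Rightarrow> 'a \<Rightarrow> real"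
    and V C0 C1 :: "'v set" and N :: "'v \<Rightarrow> 'v set"
    and \<mu> \<sigma> w w' :: real and n n0 :: nat
  assumes "prob_space M"
    and "\<sigma> > 0"
    and "finite V" and "C0 \<noteq> {}" and "C1 \<noteq> {}" and "C0 \<inter> C1 = {}" and "C0 \<union> C1 = V"
    and "card C0 = card C1"
    and "prob_space.indep_vars M (\<lambda>_. borel) X V"
    and "\<And>i. i \<in> C0 \<Longrightarrow> distributed M lborel (X i) (\<lambda>x. ennreal (normal_density \<mu> \<sigma> x))"
    and "\<And>i. i \<in> C1 \<Longrightarrow> distributed M lborel (X i) (\<lambda>x. ennreal (normal_density (- \<mu>) \<sigma> x))"
    and "n \<ge> 1" and "n0 \<le> n"
    and "\<And>i. i \<in> V \<Longrightarrow> N i \<subseteq> V - {i}"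
    and "\<And>i. i \<in> V \<Longrightarrow> card (N i) = n"
    and "\<And>i. i \<in> V \<Longrightarrow> card (N i \<inter> (if i \<in> C0 then C0 else C1)) = n0"
    and "w \<in> {0..1}" and "w' \<in> {0..1}"
    and "n0 = n \<or>
         (w \<in> {max ((real n - 2 * real n0) / (2 * real n - 2 * real n0)) 0 .. 1} \<and>
          w' \<in> {max ((real n - 2 * real n0) / (2 * real n - 2 * real n0)) 0 .. 1})"
  shows "CS M X N C0 C1 n w > CS M X N C0 C1 n w' \<longleftrightarrow>
         LCS M X N C0 C1 n w > LCS M X N C0 C1 n w'"
proof -
  note A = assms
  define mw where "mw v = \<mu> * ((1 - v) + v * (2 * real n0 - real n) / real n)" for v
  define sw where "sw v = \<sigma> * sqrt ((1 - v)\<^sup>2 + v\<^sup>2 / real n)" for v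
  have finC0: "finite C0" "finite C1" using A(3,7) by (auto intro: finite_subset)
  have key: "CS M X N C0 C1 n v = 1/2 + 1/2 * Hs (\<bar>mw v\<bar> / sw v) \<and>
             LCS M X N C0 C1 n v = 4 * (\<bar>mw v\<bar> / sw v)\<^sup>2" if v: "v \<in> {0..1}" for v
  proof -
    have "(1 - v)\<^sup>2 + v\<^sup>2 / real n > 0"
    proof (cases "v = 1")
      case True then show ?thesis using A(12) by simp
    next
      case False
      have "(1 - v)\<^sup>2 > 0" using False by simp
      moreover have "v\<^sup>2 / real n \<ge> 0" by simp
      ultimately show ?thesis by linarith
    qed
    then have s: "sw v > 0" using A(2) by (simp add: sw_def)
    have D: "distributed M lborel (embed X N n v i)
       (\<lambda>x. ennreal (normal_density ((if i \<in> C0 then 1 else -1) * mw v) (sw v) x))" if "i \<in> V" for i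
      unfolding mw_def sw_def
      by (rule embed_dist[OF A(1,2,3,6,7,9,10,11,12), of N i n0 v])
         (use A(14,15,16) that v in auto)
    have D0: "distributed M lborel (embed X N n v i) (\<lambda>x. ennreal (normal_density (mw v) (sw v) x))"
      if "i \<in> C0" for i using D[of i] that A(7) by auto
    have D1: "distributed M lborel (embed X N n v i) (\<lambda>x. ennreal (normal_density (- mw v) (sw v) x))"
      if "i \<in> C1" for i
    proof -
      have "i \<notin> C0" "i \<in> V" using that A(6,7) by auto
      then show ?thesis using D[of i] by simp
    qed
    show ?thesis
      unfolding CS_def LCS_def
      using CS_value[OF A(1) s finC0(1) A(4) finC0(2) A(5) D0 D1]
        LCS_value[OF A(1) s finC0(1) A(4) finC0(2) A(5) D0 D1]
      by (simp add: Let_def)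
  qed
  have a: "\<bar>mw w\<bar> / sw w \<ge> 0" "\<bar>mw w'\<bar> / sw w' \<ge> 0"
    using A(2) by (auto simp: sw_def)
  have sq: "4 * x\<^sup>2 > 4 * y\<^sup>2 \<longleftrightarrow> x > y" if "x \<ge> 0" "y \<ge> 0" for x y :: real
    using that by (smt (verit) power_mono power_strict_mono zero_less_numeral pos2)
  show ?thesis
    using key[OF A(17)] key[OF A(18)] Hs_iff[OF a] sq[OF a] by simp
qed

end
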